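(* Let $r>1$ be real and let $p_m,q$ be $r$-mighty primes with $p_m>q^2$. If $n\in\mathbb{N}$ satisfies $\sigma_{-r}(n)\in\left(\sigma_{-r}(q)u_m(r),\ \sigma_{-r}(qp_m)\right)$, then $q\mid n$.
   Context: $p_m$ denotes the $m$-th prime. For $n\in\mathbb{N}$, $\sigma_{-r}(n)=\sum_{d\mid n}d^{-r}$. Let $u_m(r)=\prod_{t=m+1}^\infty\frac1{1-p_t^{-r}}$. A prime $p_m$ is $r$-mighty if $1+p_m^{-r}>u_m(r)$. *)

theory Defs
  imports "HOL-Analysis.Analysis" "HOL-Computational_Algebra.Primes"
begin

text \<open>The m-th prime, 1-indexed: nthp 1 = 2, nthp 2 = 3, ...\<close>
definition nthp :: "nat \<Rightarrow> nat" where
  "nthp m = enumerate {p. prime p} (m - 1)"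

definition sigma_neg :: "real \<Rightarrow> nat \<Rightarrow> real" where
  "sigma_neg r n = (\<Sum>d\<in>{d. d dvd n}. real d powr (- r))"

definition u :: "nat \<Rightarrow> real \<Rightarrow> real" where
  "u m r = (\<Prod>i. 1 / (1 - real (nthp (i + m + 1)) powr (- r)))"

definition mighty :: "real \<Rightarrow> nat \<Rightarrow> bool" where
  "mighty r m \<longleftrightarrow> 1 + real (nthp m) powr (- r) > u m r"

end

theory Submission
  imports Defs
begin


abbreviation E :: "nat \<Rightarrow> nat" where "E \<equiv> enumerate {p::nat. prime p}"

lemma infP: "infinite {p::nat. prime p}" using primes_infinite by blast

lemma E_prime: "prime (E j)" using enumerate_in_set[OF infP] by auto

lemma E_mono: "i < j \<Longrightarrow> E i < E j" using enumerate_mono[OF _ infP] by auto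

lemma E_ge: "j \<le> E j" using le_enumerate[OF infP] by auto

lemma E_surj: "prime p \<Longrightarrow> \<exists>j. p = E j"
  using range_enumerate[OF infP] by (metis (mono_tags, lifting) mem_Collect_eq rangeE)

lemma nthp_E: "nthp j = E (j - 1)" by (simp add: nthp_def)

lemma u_E: "u k r = (\<Prod>i. 1 / (1 - real (E (i + k)) powr (- r)))"
  unfolding u_def nthp_def by simp

lemma E_ge2: "2 \<le> E j" using E_prime prime_ge_2_nat by blast

lemma term_bounds:
  assumes "r > 1"
  shows "real (E j) powr (-r) \<le> 1/2" "0 < real (E j) powr (-r)"
proof -
  have "real (E j) powr (-r) \<le> 2 powr (-r)"
    using E_ge2[of j] assms by (intro powr_mono2') auto
  also have "\<dots> \<le> 2 powr (-1)" using assms by (intro powr_mono) auto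
  finally have "real (E j) powr (-r) \<le> 2 powr (-1)" .
  then show "real (E j) powr (-r) \<le> 1/2" by (simp add: powr_minus_divide)
  show "0 < real (E j) powr (-r)" using E_ge2[of j] by simp
qed

lemma conv:
  assumes "r > 1"
  shows "convergent_prod (\<lambda>i. 1 / (1 - real (E (i + k)) powr (- r)))"
proof -
  let ?f = "\<lambda>i. 1 / (1 - real (E (i + k)) powr (- r))"
  have s: "summable (\<lambda>i. 2 * (real i powr (-r)))"
    using summable_real_powr_iff[of "-r"] assms by (intro summable_mult) auto
  have "summable (\<lambda>i. norm (?f i - 1))"
  proof (rule summable_comparison_test'[OF s, where N=1])
    fix i :: nat assume i: "i \<ge> 1"
    define x where "x = real (E (i + k)) powr (- r)"
    have x: "0 < x" "x \<le> 1/2" using term_bounds[OF assms] x_def by auto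
    have "x \<le> real i powr (-r)" unfolding x_def
      using E_ge[of "i+k"] i assms by (intro powr_mono2') auto
    moreover have "norm (1/(1-x) - 1) \<le> 2 * x"
      using x by (simp add: field_simps abs_if)
    ultimately show "norm (norm (?f i - 1)) \<le> 2 * (real i powr (-r))"
      unfolding x_def by simp
  qed
  then show ?thesis
    by (intro abs_convergent_prod_imp_convergent_prod summable_imp_abs_convergent_prod)
qed

lemma f_ge1:
  assumes "r > 1"
  shows "1 \<le> 1 / (1 - real (E j) powr (- r))"
  using term_bounds[OF assms, of j] by (simp add: field_simps)

lemma u_ge_partial:
  assumes "r > 1"
  shows "(\<Prod>i<N. 1 / (1 - real (E (i + k)) powr (- r))) \<le> u k r"
proof -
  obtain a where "(\<lambda>i. 1 / (1 - real (E (i + k)) powr (- r))) has_prod a"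
    using convergent_prod_imp_has_prod[OF conv[OF assms]] by blast
  then show ?thesis unfolding u_E
    by (rule prod_le_prodinf) (use order_trans[OF zero_le_one f_ge1[OF assms]] f_ge1[OF assms] in auto)
qed


lemma sigma_nonneg: "0 \<le> sigma_neg r n"
  unfolding sigma_neg_def by (intro sum_nonneg) auto

lemma fin_divs: "n > 0 \<Longrightarrow> finite {d::nat. d dvd n}"
  by (simp add: finite_divisors_nat)

lemma sigma_mult_le:
  assumes "a > 0" "b > 0"
  shows "sigma_neg r (a * b) \<le> sigma_neg r a * sigma_neg r b"
proof -
  let ?g = "\<lambda>d::nat. real d powr (-r)"
  let ?A = "{d. d dvd a}" and ?B = "{d. d dvd b}"
  have fA: "finite ?A" and fB: "finite ?B" using assms fin_divs by auto
  have sub: "{d. d dvd a * b} \<subseteq> (\<lambda>(x,y). x * y) ` (?A \<times> ?B)"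
  proof
    fix d assume "d \<in> {d. d dvd a * b}"
    then obtain x y where "d = x * y" "x dvd a" "y dvd b"
      using division_decomp[of d a b] by blast
    then show "d \<in> (\<lambda>(x,y). x * y) ` (?A \<times> ?B)" by auto
  qed
  have "sigma_neg r (a * b) \<le> sum ?g ((\<lambda>(x,y). x * y) ` (?A \<times> ?B))"
    unfolding sigma_neg_def
    by (rule sum_mono2) (use sub fA fB in auto)
  also have "\<dots> \<le> sum (?g \<circ> (\<lambda>(x,y). x * y)) (?A \<times> ?B)"
    by (rule sum_image_le) (use fA fB in auto)
  also have "\<dots> = (\<Sum>x\<in>?A. \<Sum>y\<in>?B. ?g x * ?g y)"
    by (subst sum.cartesian_product) (auto simp: powr_mult intro!: sum.cong)
  also have "\<dots> = sigma_neg r a * sigma_neg r b"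
    unfolding sigma_neg_def by (simp add: sum_product)
  finally show ?thesis .
qed

lemma sigma_prime:
  assumes "prime p"
  shows "sigma_neg r p = 1 + real p powr (-r)"
proof -
  have "{d. d dvd p} = {1, p}" using assms prime_nat_iff by auto
  moreover have "p \<noteq> 1" using assms by auto
  ultimately show ?thesis unfolding sigma_neg_def by simp
qed

lemma sigma_primepow_le:
  assumes "prime p" "r > 0"
  shows "sigma_neg r (p ^ e) \<le> 1 / (1 - real p powr (-r))"
proof -
  define x where "x = real p powr (-r)"
  have p2: "real p \<ge> 2" using assms prime_ge_2_nat by auto
  have x0: "0 < x" using p2 by (simp add: x_def)
  have "x < 1" unfolding x_def using p2 assms
    by (subst powr_less_one) auto 
  have "{d. d dvd p ^ e} = (\<lambda>i. p ^ i) ` {..e}"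
    using divides_primepow_nat[OF assms(1)] by auto
  then have "sigma_neg r (p ^ e) \<le> sum ((\<lambda>d. real d powr (-r)) \<circ> (\<lambda>i. p ^ i)) {..e}"
    unfolding sigma_neg_def by (metis (no_types, lifting) finite_atMost powr_ge_zero sum_image_le)
  also have "\<dots> = (\<Sum>i<Suc e. x ^ i)"
  proof -
    have *: "(real p ^ i) powr -r = x ^ i" for i
    proof -
      have "(real p ^ i) powr -r = (real p powr real i) powr -r" using p2 by (simp add: powr_realpow)
      also have "\<dots> = (real p powr -r) powr real i" by (simp add: powr_powr mult.commute)
      also have "\<dots> = x ^ i" unfolding x_def using p2 by (simp add: powr_realpow)
      finally show ?thesis .
    qed
    show ?thesis using * by (simp add: lessThan_Suc_atMost)
  qed

  also have "\<dots> = (1 - x ^ Suc e) / (1 - x)" unfolding sum_gp_strict using \<open>x < 1\<close> by simp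
  also have "\<dots> \<le> 1 / (1 - x)" using \<open>x < 1\<close> x0 by (intro divide_right_mono) auto
  finally show ?thesis by (simp add: x_def)
qed


lemma sigma_prod_le:
  assumes "finite P" "\<And>p. p \<in> P \<Longrightarrow> g p > 0"
  shows "sigma_neg r (\<Prod>p\<in>P. g p) \<le> (\<Prod>p\<in>P. sigma_neg r (g p))"
  using assms
proof (induction P rule: finite_induct)
  case empty
  have "{d::nat. d dvd 1} = {1}" by auto
  then show ?case unfolding sigma_neg_def by simp
next
  case (insert x F)
  have "sigma_neg r (\<Prod>p\<in>insert x F. g p) = sigma_neg r (g x * (\<Prod>p\<in>F. g p))"
    using insert by simp
  also have "\<dots> \<le> sigma_neg r (g x) * sigma_neg r (\<Prod>p\<in>F. g p)"
    using insert by (intro sigma_mult_le) (auto intro: prod_pos)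
  also have "\<dots> \<le> sigma_neg r (g x) * (\<Prod>p\<in>F. sigma_neg r (g p))"
    using insert by (intro mult_left_mono sigma_nonneg) auto
  also have "\<dots> = (\<Prod>p\<in>insert x F. sigma_neg r (g p))" using insert by simp
  finally show ?case .
qed

lemma sigma_le_euler:
  assumes "n > 0" "r > 0"
  shows "sigma_neg r n \<le> (\<Prod>p\<in>prime_factors n. 1 / (1 - real p powr (-r)))"
proof -
  have "sigma_neg r n = sigma_neg r (\<Prod>p\<in>prime_factors n. p ^ multiplicity p n)"
    using prod_prime_factors[of n] assms by simp
  also have "\<dots> \<le> (\<Prod>p\<in>prime_factors n. sigma_neg r (p ^ multiplicity p n))"
    by (rule sigma_prod_le) (auto simp: prime_gt_0_nat in_prime_factors_iff)
  also have "\<dots> \<le> (\<Prod>p\<in>prime_factors n. 1 / (1 - real p powr (-r)))"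
    by (intro prod_mono conjI sigma_nonneg sigma_primepow_le) (use assms in \<open>auto simp: in_prime_factors_iff\<close>)
  finally show ?thesis .
qed

lemma sigma_le_u:
  assumes "n > 0" "r > 1" "k \<ge> 1" "\<And>p. p \<in> prime_factors n \<Longrightarrow> E (k - 1) < p"
  shows "sigma_neg r n \<le> u k r"
proof -
  let ?f = "\<lambda>i. 1 / (1 - real (E (i + k)) powr (- r))"
  let ?h = "\<lambda>p::nat. 1 / (1 - real p powr (-r))"
  define J where "J = {i. E (i + k) \<in> prime_factors n}"
  have PF: "prime_factors n = (\<lambda>i. E (i + k)) ` J"
  proof
    show "prime_factors n \<subseteq> (\<lambda>i. E (i + k)) ` J"
    proof
      fix p assume p: "p \<in> prime_factors n"
      then obtain j where j: "p = E j" using E_surj by (auto simp: in_prime_factors_iff)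
      have "E (k - 1) < E j" using assms(4) p j by auto
      then have "k - 1 < j" using enumerate_mono_iff[OF infP] by simp
      then have "j = (j - k) + k" using assms(3) by simp
      then show "p \<in> (\<lambda>i. E (i + k)) ` J" using p j unfolding J_def
        by (intro image_eqI[of _ _ "j - k"]) auto
    qed
  qed (auto simp: J_def)
  have inj: "inj_on (\<lambda>i. E (i + k)) J"
  proof (rule inj_onI)
    fix i j assume "E (i + k) = E (j + k)"
    moreover have "inj E" using strict_mono_enumerate[OF infP] strict_mono_imp_inj_on by blast
    ultimately have "i + k = j + k" by (simp add: inj_eq)
    then show "i = j" by simp
  qed
  have Jsub: "J \<subseteq> {..<Suc n}"
  proof
    fix i assume "i \<in> J"
    then have "E (i + k) \<le> n" unfolding J_def using assms(1)
      by (auto simp: in_prime_factors_iff dvd_imp_le)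
    moreover have "i \<le> E (i + k)" using E_ge[of "i+k"] by simp
    ultimately show "i \<in> {..<Suc n}" by simp
  qed
  have "sigma_neg r n \<le> (\<Prod>p\<in>prime_factors n. ?h p)"
    by (rule sigma_le_euler) (use assms in auto)
  also have "\<dots> = (\<Prod>i\<in>J. ?f i)" unfolding PF using inj by (simp add: prod.reindex)
  also have "\<dots> \<le> (\<Prod>i<Suc n. ?f i)"
  proof (rule prod_mono2)
    show "finite {..<Suc n}" by simp
    show "J \<subseteq> {..<Suc n}" by (rule Jsub)
    show "1 \<le> ?f b" for b by (rule f_ge1[OF assms(2)])
    show "0 \<le> ?f a" for a by (rule order_trans[OF zero_le_one f_ge1[OF assms(2)]])
  qed
  also have "\<dots> \<le> u k r" by (rule u_ge_partial[OF assms(2)])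
  finally show ?thesis .
qed


lemma u_ge1: "r > 1 \<Longrightarrow> 1 \<le> u k r"
  using u_ge_partial[where N=0 and k=k] by simp

lemma sigma_two_primes:
  assumes "prime q" "prime M" "q < M"
  shows "sigma_neg r (q * M) = (1 + real q powr (-r)) * (1 + real M powr (-r))"
proof -
  have "{d. d dvd q * M} = {1, q, M, q * M}"
  proof
    show "{d. d dvd q * M} \<subseteq> {1, q, M, q * M}"
    proof
      fix d assume "d \<in> {d. d dvd q * M}"
      then obtain x y where "d = x * y" "x dvd q" "y dvd M"
        using division_decomp[of d q M] by auto
      moreover have "x = 1 \<or> x = q" using \<open>x dvd q\<close> assms(1) prime_nat_iff by blast
      moreover have "y = 1 \<or> y = M" using \<open>y dvd M\<close> assms(2) prime_nat_iff by blast
      ultimately show "d \<in> {1, q, M, q * M}" by auto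
    qed
  qed auto
  moreover have "q \<noteq> 1" "M \<noteq> 1" "q \<noteq> M" "q * M \<noteq> 1" "q * M \<noteq> q" "q * M \<noteq> M"
    using assms prime_gt_1_nat by auto
  ultimately have "sigma_neg r (q * M) = 1 + real q powr (-r) + real M powr (-r) + real (q * M) powr (-r)"
    unfolding sigma_neg_def by (simp add: add.assoc)
  also have "real (q * M) powr (-r) = real q powr (-r) * real M powr (-r)"
    by (simp add: powr_mult)
  finally show ?thesis by (simp add: distrib_left distrib_right)
qed

lemma real_ineq:
  fixes Q M r :: real
  assumes "Q \<ge> 2" "M \<ge> Q^2 + 1" "r \<ge> 1"
  shows "(1 + Q powr (-r)) * (1 + M powr (-r)) \<le> 1 + (Q - 1) powr (-r)"
proof -
  define B where "B = Q powr (-r)"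
  define C where "C = (Q^2 + 1) powr (-r)"
  have Q2: "Q^2 + 1 > 0" by (smt (verit) zero_le_power2)
  have B0: "B > 0" using assms unfolding B_def by simp
  have eqA: "(Q - 1) powr (-r) = B * (Q / (Q - 1)) powr r"
    unfolding B_def using assms by (simp add: powr_divide powr_minus field_simps)
  have Qge0: "(Q / (Q - 1)) powr 1 \<le> (Q / (Q - 1)) powr r"
    using assms by (intro powr_mono) auto
  have Qge: "Q / (Q - 1) \<le> (Q / (Q - 1)) powr r"
    using Qge0 assms by simp
  have "B * (Q / (Q - 1)) \<le> B * (Q / (Q - 1)) powr r"
    by (rule mult_left_mono[OF Qge]) (use B0 in simp)
  then have A: "(Q - 1) powr (-r) \<ge> B * (Q / (Q - 1))" using eqA by simp
  have MC: "M powr (-r) \<le> C" unfolding C_def using assms Q2 by (intro powr_mono2') auto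
  have eqC: "C = B * (Q / (Q^2+1)) powr r"
    unfolding B_def C_def using assms Q2 by (simp add: powr_divide powr_minus field_simps)
  have QQ: "2*Q \<le> Q*Q" using mult_right_mono[OF assms(1), of Q] assms by simp
  have "Q \<le> Q^2+1" unfolding power2_eq_square using QQ assms by linarith
  then have "Q / (Q^2+1) \<le> 1" using Q2 by simp
  then have P0: "(Q / (Q^2+1)) powr r \<le> (Q / (Q^2+1)) powr 1"
    using assms Q2 by (intro powr_mono') auto
  have P1: "(Q / (Q^2+1)) powr r \<le> Q / (Q^2+1)" using P0 assms Q2 by simp
  have "B * (Q / (Q^2+1)) powr r \<le> B * (Q / (Q^2+1))"
    by (rule mult_left_mono[OF P1]) (use B0 in simp)
  then have C1: "C \<le> B * (Q / (Q^2+1))" using eqC by simp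
  have "C \<le> (Q^2+1) powr (-1)" unfolding C_def using assms by (intro powr_mono) auto
  then have C2: "C \<le> 1 / (Q^2+1)" by (simp add: powr_minus_divide)
  have C0: "C \<ge> 0" unfolding C_def by simp
  have "(1 + B) * (1 + M powr (-r)) \<le> (1 + B) * (1 + C)"
    using MC B0 by (intro mult_left_mono) auto
  also have "\<dots> = 1 + B + C + B * C" by (simp add: algebra_simps)
  also have "\<dots> \<le> 1 + B + B * (Q / (Q^2+1)) + B * (1 / (Q^2+1))"
    using C1 C2 B0 by (intro add_mono mult_left_mono) auto
  also have "\<dots> \<le> 1 + B * (Q / (Q - 1))"
  proof -
    have Q1: "Q - 1 > 0" using assms by simp
    have "Q / (Q^2+1) + 1 / (Q^2+1) = (Q+1) / (Q^2+1)" by (simp add: add_divide_distrib)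
    also have "\<dots> \<le> 1 / (Q - 1)"
      using Q1 Q2 by (simp add: divide_simps power2_eq_square algebra_simps)
    finally have "Q / (Q^2+1) + 1 / (Q^2+1) \<le> 1 / (Q - 1)" .
    then have "B * (Q / (Q^2+1) + 1 / (Q^2+1)) \<le> B * (1 / (Q - 1))"
      using B0 by (intro mult_left_mono) auto
    moreover have "B + B * (1 / (Q - 1)) = B * (Q / (Q - 1))"
      using assms by (simp add: field_simps)
    ultimately show ?thesis by (simp add: algebra_simps)
  qed
  also have "\<dots> \<le> 1 + (Q - 1) powr (-r)" using A by simp
  finally show ?thesis unfolding B_def .
qed


theorem mainTheorem6:
  fixes r :: real and m k n :: nat
  assumes "r > 1"
    and "m \<ge> 1" and "mighty r m"
    and "k \<ge> 1" and "mighty r k"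
    and "nthp m > (nthp k)^2"
    and "n > 0"
    and "sigma_neg r n > sigma_neg r (nthp k) * u m r"
    and "sigma_neg r n < sigma_neg r (nthp k * nthp m)"
  shows "nthp k dvd n"
proof (rule ccontr)
  assume nd: "\<not> nthp k dvd n"
  define q where "q = nthp k"
  define M where "M = nthp m"
  have qE: "q = E (k - 1)" unfolding q_def nthp_E ..
  have pq: "prime q" and pM: "prime M" unfolding qE M_def nthp_E by (rule E_prime)+
  have q2: "q \<ge> 2" using pq prime_ge_2_nat by auto
  have Mq2: "M > q^2" using assms(6) unfolding q_def M_def .
  have "q \<le> q^2" using q2 by (simp add: power2_eq_square)
  then have qM: "q < M" using Mq2 by simp
  have sq: "sigma_neg r q = 1 + real q powr (-r)" by (rule sigma_prime[OF pq])
  show False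
  proof (cases "\<exists>p. prime p \<and> p dvd n \<and> p < q")
    case True
    then obtain p where p: "prime p" "p dvd n" "p < q" by blast
    have p1: "p \<noteq> 1" using p by auto
    have fin: "finite {d. d dvd n}" using assms(7) fin_divs by auto
    have "sigma_neg r n \<ge> (\<Sum>d\<in>{1, p}. real d powr (-r))"
      unfolding sigma_neg_def by (rule sum_mono2) (use fin p in auto)
    then have s1: "sigma_neg r n \<ge> 1 + real p powr (-r)" using p1 by simp
    have "real p \<le> real q - 1" using p by linarith
    moreover have "real p > 0" using p prime_gt_0_nat by auto
    ultimately have "(real q - 1) powr (-r) \<le> real p powr (-r)"
      using assms(1) by (intro powr_mono2') auto
    moreover have "(1 + real q powr (-r)) * (1 + real M powr (-r)) \<le> 1 + (real q - 1) powr (-r)"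
    proof (rule real_ineq)
      show "2 \<le> real q" using q2 by simp
      have "q^2 + 1 \<le> M" using Mq2 by simp
      then have "real (q^2 + 1) \<le> real M" by (simp only: of_nat_le_iff)
      then show "(real q)^2 + 1 \<le> real M" by simp
      show "1 \<le> r" using assms(1) by simp
    qed
    ultimately have "sigma_neg r (q * M) \<le> sigma_neg r n"
      using s1 sigma_two_primes[OF pq pM qM] by simp
    then show False using assms(9) unfolding q_def M_def by simp
  next
    case False
    have "\<And>p. p \<in> prime_factors n \<Longrightarrow> E (k - 1) < p"
    proof -
      fix p assume "p \<in> prime_factors n"
      then have "prime p" "p dvd n" by (auto simp: in_prime_factors_iff)
      then have "p \<noteq> q" "\<not> p < q" using nd False unfolding q_def by auto
      then show "E (k - 1) < p" unfolding qE[symmetric] by simp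
    qed
    then have "sigma_neg r n \<le> u k r" using sigma_le_u assms by blast
    also have "\<dots> < 1 + real q powr (-r)" using assms(5) unfolding mighty_def q_def by simp
    also have "\<dots> \<le> sigma_neg r q * u m r"
      using sq mult_left_mono[OF u_ge1[OF assms(1), of m], of "1 + real q powr (-r)"]
      by (simp add: add_nonneg_nonneg)
    finally show False using assms(8) unfolding q_def by simp
  qed
qed

end
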